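(* Let $T\ge 1$ and $\beta\in(0,1)$, and set $\gamma = \frac{1-\beta}{\beta}$. Let $\mathbf{x}$ be a random vector in $\mathbb{R}^T$ with probability density $p$ (with respect to Lebesgue measure) and $\mathbb{E}\|\mathbf{x}\|^2<\infty$. Let $q(\tilde{\mathbf{x}}\mid\mathbf{x})$ be a Markov kernel with a conditional density on $\mathbb{R}^T$. Generate the noisy observation $\tilde{\mathbf{x}}$ as follows: independently of $\mathbf{x}$, draw $B\sim\mathrm{Bernoulli}(\beta)$; if $B=1$ set $\tilde{\mathbf{x}}=\mathbf{x}$, and if $B=0$ draw $\tilde{\mathbf{x}}\sim q(\cdot\mid\mathbf{x})$. That is, the noise distribution is $$p(\tilde{\mathbf{x}}\mid\mathbf{x}) = \beta\,\delta(\tilde{\mathbf{x}}=\mathbf{x}) + (1-\beta)\,q(\tilde{\mathbf{x}}\mid\mathbf{x}).$$ Let $q(\tilde{\mathbf{x}}) = \int q(\tilde{\mathbf{x}}\mid\mathbf{x})\,p(\mathbf{x})\,d\mathbf{x}$ be the marginal density of the noisy data under $q$, let $q(\mathbf{x}\mid\tilde{\mathbf{x}}) = q(\tilde{\mathbf{x}}\mid\mathbf{x})p(\mathbf{x})/q(\tilde{\mathbf{x}})$ (defined where $q(\tilde{\mathbf{x}})>0$), and define $$g_\star(\tilde{\mathbf{x}}) = \mathbb{E}_{q(\mathbf{x}\mid\tilde{\mathbf{x}})}[\mathbf{x}] = \frac{\int \mathbf{x}\,q(\tilde{\mathbf{x}}\mid\mathbf{x})p(\mathbf{x})\,d\mathbf{x}}{q(\tilde{\mathbf{x}})},\qquad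 \omega(\tilde{\mathbf{x}}) = \frac{p(\tilde{\mathbf{x}})}{p(\tilde{\mathbf{x}})+\gamma\, q(\tilde{\mathbf{x}})}\in[0,1]$$ (where $p(\tilde{\mathbf{x}})$ denotes the data density $p$ evaluated at $\tilde{\mathbf{x}}$), on the set where $p(\tilde{\mathbf{x}})+\gamma q(\tilde{\mathbf{x}})>0$. Then, among all measurable functions $f:\mathbb{R}^T\to\mathbb{R}^T$ with $\mathbb{E}\|f(\tilde{\mathbf{x}})\|^2<\infty$, the expected squared error $$\mathbb{E}\big[(f(\tilde{\mathbf{x}})-\mathbf{x})^\top(f(\tilde{\mathbf{x}})-\mathbf{x})\big]$$ is minimized by $$f_\star(\tilde{\mathbf{x}}) = \omega(\tilde{\mathbf{x}})\,\tilde{\mathbf{x}} + \big(1-\omega(\tilde{\mathbf{x}})\big)\,g_\star(\tilde{\mathbf{x}}),$$ and any minimizer agrees with $f_\star$ almost everywhere with respect to the distribution of $\tilde{\mathbf{x}}$ (whose density is $\beta p + (1-\beta) q$).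
   Context: Here $\delta(\tilde{\mathbf{x}}=\mathbf{x})$ denotes the Dirac point mass at $\mathbf{x}$, so the noise model is a mixture: with probability $\beta$ no corruption occurs, and with probability $1-\beta$ the observation is drawn from the corruption kernel $q(\cdot\mid\mathbf{x})$. The expectation in the objective is over the joint law of $(\mathbf{x},\tilde{\mathbf{x}})$ with $\mathbf{x}\sim p$ and $\tilde{\mathbf{x}}\sim p(\cdot\mid\mathbf{x})$. *)

theory Defs
  imports "HOL-Probability.Probability"
begin

text \<open>Pairs are (x, x~).\<close>
definition noisy_joint :: "real \<Rightarrow> ('a::euclidean_space \<Rightarrow> real) \<Rightarrow> ('a \<Rightarrow> 'a \<Rightarrow> real) \<Rightarrow> ('a \<times> 'a) measure" where
  "noisy_joint \<beta> p q =
     density lborel (\<lambda>x. ennreal (p x)) \<bind> (\<lambda>x.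
       measure_pmf (bernoulli_pmf \<beta>) \<bind> (\<lambda>b.
         if b then return borel (x, x)
         else distr (density lborel (\<lambda>xt. ennreal (q x xt))) borel (\<lambda>xt. (x, xt))))"

definition q_marg :: "('a::euclidean_space \<Rightarrow> real) \<Rightarrow> ('a \<Rightarrow> 'a \<Rightarrow> real) \<Rightarrow> 'a \<Rightarrow> real" where
  "q_marg p q xt = (\<integral>x. q x xt * p x \<partial>lborel)"

definition g_star :: "('a::euclidean_space \<Rightarrow> real) \<Rightarrow> ('a \<Rightarrow> 'a \<Rightarrow> real) \<Rightarrow> 'a \<Rightarrow> 'a" where
  "g_star p q xt = (1 / q_marg p q xt) *\<^sub>R (\<integral>x. (q x xt * p x) *\<^sub>R x \<partial>lborel)"

definition omega :: "real \<Rightarrow> ('a::euclidean_space \<Rightarrow> real) \<Rightarrow> ('a \<Rightarrow> 'a \<Rightarrow> real) \<Rightarrow> 'a \<Rightarrow> real" where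
  "omega \<beta> p q xt = p xt / (p xt + ((1 - \<beta>) / \<beta>) * q_marg p q xt)"

definition f_star :: "real \<Rightarrow> ('a::euclidean_space \<Rightarrow> real) \<Rightarrow> ('a \<Rightarrow> 'a \<Rightarrow> real) \<Rightarrow> 'a \<Rightarrow> 'a" where
  "f_star \<beta> p q xt = omega \<beta> p q xt *\<^sub>R xt + (1 - omega \<beta> p q xt) *\<^sub>R g_star p q xt"

definition sq_risk :: "('a \<times> 'a) measure \<Rightarrow> ('a::euclidean_space \<Rightarrow> 'a) \<Rightarrow> real" where
  "sq_risk J f = (\<integral>z. (f (snd z) - fst z) \<bullet> (f (snd z) - fst z) \<partial>J)"

definition admissible :: "('a \<times> 'a) measure \<Rightarrow> ('a::euclidean_space \<Rightarrow> 'a) \<Rightarrow> bool" where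
  "admissible J f \<longleftrightarrow> f \<in> borel_measurable borel \<and> integrable J (\<lambda>z. (norm (f (snd z)))\<^sup>2)"

end

theory Submission imports Defs begin

lemma sets_lb2: "sets (lborel \<Otimes>\<^sub>M lborel) = sets (borel :: ('a::euclidean_space \<times> 'a) measure)"
  by (metis borel_prod sets_lborel sets_pair_measure_cong)

lemma meas_lb2: "f \<in> borel_measurable (borel :: ('a::euclidean_space \<times> 'a) measure) \<Longrightarrow> f \<in> borel_measurable (lborel \<Otimes>\<^sub>M lborel)"
  using measurable_cong_sets[OF sets_lb2 refl] by blast

lemma meas_lb2': "f \<in> borel_measurable (lborel \<Otimes>\<^sub>M lborel) \<Longrightarrow> f \<in> borel_measurable (borel :: ('a::euclidean_space \<times> 'a) measure)"
  using measurable_cong_sets[OF sets_lb2 refl] by blast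

lemma le_1_sq: "(t::real) \<le> 1 + t\<^sup>2"
proof (cases "t \<le> 1")
  case True
  have "0 \<le> t\<^sup>2" by simp
  then show ?thesis using True by linarith
next
  case False
  then have "1 * t \<le> t * t" by (intro mult_right_mono) auto
  then show ?thesis by (simp add: power2_eq_square)
qed

lemma quad:
  fixes a b Q S D :: real and y m c v :: "'a::real_inner"
  assumes D: "D = a + b * Q" and c: "D *\<^sub>R c = a *\<^sub>R y + b *\<^sub>R m"
  shows "a * (norm (v - y))\<^sup>2 + b * (Q * (norm v)\<^sup>2 - 2 * (v \<bullet> m) + S)
       = a * (norm (c - y))\<^sup>2 + b * (Q * (norm c)\<^sup>2 - 2 * (c \<bullet> m) + S) + D * (norm (v - c))\<^sup>2"
proof -
  have h1: "b * (v \<bullet> m) = D * (v \<bullet> c) - a * (v \<bullet> y)"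
  proof -
    have "v \<bullet> (D *\<^sub>R c) = v \<bullet> (a *\<^sub>R y + b *\<^sub>R m)" using c by simp
    then show ?thesis by (simp add: inner_add_right)
  qed
  have h2: "b * (c \<bullet> m) = D * (c \<bullet> c) - a * (c \<bullet> y)"
  proof -
    have "c \<bullet> (D *\<^sub>R c) = c \<bullet> (a *\<^sub>R y + b *\<^sub>R m)" using c by simp
    then show ?thesis by (simp add: inner_add_right)
  qed
  have e: "\<And>u w :: 'a. (norm (u - w))\<^sup>2 = u \<bullet> u - 2 * (u \<bullet> w) + w \<bullet> w"
    by (simp add: power2_norm_eq_inner inner_diff_left inner_diff_right inner_commute)
  have e2: "\<And>u :: 'a. (norm u)\<^sup>2 = u \<bullet> u" by (simp add: power2_norm_eq_inner)
  show ?thesis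
    unfolding e e2 using h1 h2 unfolding D by (simp add: algebra_simps inner_commute)
qed

locale setting =
  fixes \<beta> :: real and p :: "'a::euclidean_space \<Rightarrow> real" and q :: "'a \<Rightarrow> 'a \<Rightarrow> real"
  assumes beta: "0 < \<beta>" "\<beta> < 1"
    and p_meas: "p \<in> borel_measurable borel"
    and p_nonneg: "\<And>x. 0 \<le> p x"
    and p_prob: "(\<integral>\<^sup>+ x. ennreal (p x) \<partial>lborel) = 1"
    and p_second_moment: "integrable (density lborel (\<lambda>x. ennreal (p x))) (\<lambda>x. (norm x)\<^sup>2)"
    and q_meas: "(\<lambda>(x, xt). q x xt) \<in> borel_measurable borel"
    and q_nonneg: "\<And>x xt. 0 \<le> q x xt"
    and q_prob: "\<And>x. (\<integral>\<^sup>+ xt. ennreal (q x xt) \<partial>lborel) = 1"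
begin

definition K :: "'a \<Rightarrow> ('a \<times> 'a) measure" where
  "K x = measure_pmf (bernoulli_pmf \<beta>) \<bind> (\<lambda>b.
         if b then return borel (x, x)
         else distr (density lborel (\<lambda>xt. ennreal (q x xt))) borel (\<lambda>xt. (x, xt)))"

lemma J_def: "noisy_joint \<beta> p q = density lborel (\<lambda>x. ennreal (p x)) \<bind> K"
  unfolding noisy_joint_def K_def ..

lemma q_meas2[measurable]: "(\<lambda>(x, xt). q x xt) \<in> borel_measurable (lborel \<Otimes>\<^sub>M lborel)"
  using meas_lb2[OF q_meas] .

lemma q_meas_y[measurable]: "q x \<in> borel_measurable borel"
  using measurable_compose[OF measurable_Pair2'[of x lborel lborel] q_meas2] by simp

lemma q_meas_x[measurable]: "(\<lambda>x. q x y) \<in> borel_measurable borel"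
  using measurable_compose[OF measurable_Pair1'[of y lborel lborel] q_meas2] by simp

lemma p_meas'[measurable]: "p \<in> borel_measurable lborel"
  using p_meas by simp

lemma Pair_meas[measurable]: "(\<lambda>xt. (x, xt)) \<in> (borel :: 'a measure) \<rightarrow>\<^sub>M (borel :: ('a\<times>'a) measure)"
  using measurable_Pair2'[of x lborel lborel] measurable_cong_sets[OF sets_lborel sets_lb2] by simp

lemma sets_G: "sets (if b then return borel (x, x)
         else distr (density lborel (\<lambda>xt. ennreal (q x xt))) borel (\<lambda>xt. (x, xt))) = sets (borel :: ('a\<times>'a) measure)"
  by auto

lemma K_sets: "sets (K x) = sets borel"
  unfolding K_def by (rule sets_bind) (auto simp: sets_G)

lemma Qx_prob: "prob_space (density lborel (\<lambda>xt. ennreal (q x xt)))"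
proof (rule prob_spaceI)
  show "emeasure (density lborel (\<lambda>xt. ennreal (q x xt))) (space (density lborel (\<lambda>xt. ennreal (q x xt)))) = 1"
    by (subst emeasure_density) (auto simp: q_prob)
qed

lemma Pair_meas_d: "(\<lambda>xt. (x, xt)) \<in> density lborel (\<lambda>xt. ennreal (q x xt)) \<rightarrow>\<^sub>M (borel :: ('a\<times>'a) measure)"
proof -
  have "sets (density lborel (\<lambda>xt. ennreal (q x xt))) = sets (borel::'a measure)" by simp
  from measurable_cong_sets[OF this refl, of "borel :: ('a\<times>'a) measure"] Pair_meas[of x]
  show ?thesis by simp
qed

lemma G_space: "(if b then return borel (x, x)
         else distr (density lborel (\<lambda>xt. ennreal (q x xt))) borel (\<lambda>xt. (x, xt))) \<in> space (subprob_algebra borel)"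
proof (cases b)
  case True then show ?thesis by (simp add: space_subprob_algebra subprob_space_return)
next
  case False
  have "subprob_space (distr (density lborel (\<lambda>xt. ennreal (q x xt))) borel (\<lambda>xt. (x, xt)))"
    by (rule subprob_space.subprob_space_distr[OF prob_space_imp_subprob_space[OF Qx_prob] Pair_meas_d]) simp
  with False show ?thesis by (simp add: space_subprob_algebra)
qed

lemma K_nn:
  assumes h: "h \<in> borel_measurable (borel :: ('a\<times>'a) measure)"
  shows "(\<integral>\<^sup>+ z. h z \<partial>K x) = ennreal \<beta> * h (x, x) + ennreal (1 - \<beta>) * (\<integral>\<^sup>+ y. ennreal (q x y) * h (x, y) \<partial>lborel)"
proof -
  let ?G = "\<lambda>b. if b then return borel (x, x)
         else distr (density lborel (\<lambda>xt. ennreal (q x xt))) borel (\<lambda>xt. (x, xt))"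
  have Gm: "?G \<in> measure_pmf (bernoulli_pmf \<beta>) \<rightarrow>\<^sub>M subprob_algebra borel"
    using G_space by (simp add: Pi_iff)
  have "(\<integral>\<^sup>+ z. h z \<partial>K x) = (\<integral>\<^sup>+ b. \<integral>\<^sup>+ z. h z \<partial>?G b \<partial>measure_pmf (bernoulli_pmf \<beta>))"
    unfolding K_def by (rule nn_integral_bind[OF h Gm])
  also have "\<dots> = (\<integral>\<^sup>+ z. h z \<partial>?G True) * \<beta> + (\<integral>\<^sup>+ z. h z \<partial>?G False) * (1 - \<beta>)"
    using beta by (intro nn_integral_bernoulli_pmf) auto
  also have "(\<integral>\<^sup>+ z. h z \<partial>?G True) = h (x, x)"
    using h by (simp add: nn_integral_return)
  also have "(\<integral>\<^sup>+ z. h z \<partial>?G False) = (\<integral>\<^sup>+ y. h (x, y) \<partial>density lborel (\<lambda>xt. ennreal (q x xt)))"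
    using h by (simp add: nn_integral_distr[OF Pair_meas_d])
  also have "\<dots> = (\<integral>\<^sup>+ y. ennreal (q x y) * h (x, y) \<partial>lborel)"
    by (rule nn_integral_density) (use h Pair_meas[of x] in auto)
  finally show ?thesis by (simp add: mult.commute)
qed

lemma K_space: "space (K x) = UNIV"
  using sets_eq_imp_space_eq[OF K_sets[of x]] by simp

lemma K_prob: "prob_space (K x)"
proof (rule prob_spaceI)
  have "(\<integral>\<^sup>+ z. 1 \<partial>K x) = ennreal \<beta> * 1 + ennreal (1 - \<beta>) * (\<integral>\<^sup>+ y. ennreal (q x y) * 1 \<partial>lborel)"
    by (rule K_nn) simp
  also have "\<dots> = 1" using beta by (simp add: q_prob ennreal_plus[symmetric] del: ennreal_plus)
  finally show "emeasure (K x) (space (K x)) = 1" by simp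
qed

lemma diag_meas: "(\<lambda>a. (a, a)) \<in> (borel :: 'a measure) \<rightarrow>\<^sub>M (borel :: ('a\<times>'a) measure)"
  using measurable_Pair[OF measurable_ident_sets[of lborel lborel] measurable_ident_sets[of lborel lborel]]
    measurable_cong_sets[OF sets_lborel sets_lb2] by (simp add: id_def)

lemma K_meas_lb: "K \<in> lborel \<rightarrow>\<^sub>M subprob_algebra borel"
proof (rule measurable_subprob_algebra)
  fix a show "subprob_space (K a)" using K_prob prob_space_imp_subprob_space by blast
  show "sets (K a) = sets borel" by (rule K_sets)
next
  fix A :: "('a\<times>'a) set" assume A: "A \<in> sets borel"
  have ind: "indicator A \<in> borel_measurable (borel :: ('a\<times>'a) measure)"
    using A by simp
  have e: "emeasure (K a) A = ennreal \<beta> * indicator A (a, a) + ennreal (1 - \<beta>) * (\<integral>\<^sup>+ y. ennreal (q a y) * indicator A (a, y) \<partial>lborel)" for a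
  proof -
    have "emeasure (K a) A = (\<integral>\<^sup>+ z. indicator A z \<partial>K a)"
      using A K_sets[of a] by (simp add: nn_integral_indicator)
    also have "\<dots> = ennreal \<beta> * indicator A (a, a) + ennreal (1 - \<beta>) * (\<integral>\<^sup>+ y. ennreal (q a y) * indicator A (a, y) \<partial>lborel)" by (rule K_nn[OF ind])
    finally show ?thesis .
  qed
  have m1: "(\<lambda>a. indicator A (a, a) :: ennreal) \<in> borel_measurable lborel"
    using measurable_compose[OF diag_meas ind] by simp
  have "(\<lambda>z. ennreal (q (fst z) (snd z)) * indicator A z) \<in> borel_measurable (borel :: ('a\<times>'a) measure)"
    using q_meas ind by (intro borel_measurable_times_ennreal) (auto simp: case_prod_beta')
  then have "(\<lambda>(a, y). ennreal (q a y) * indicator A (a, y)) \<in> borel_measurable (lborel \<Otimes>\<^sub>M lborel)"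
    by (intro meas_lb2) (simp add: case_prod_beta')
  then have m2: "(\<lambda>a. \<integral>\<^sup>+ y. ennreal (q a y) * indicator A (a, y) \<partial>lborel) \<in> borel_measurable lborel"
    by (rule lborel.borel_measurable_nn_integral)
  show "(\<lambda>a. emeasure (K a) A) \<in> borel_measurable lborel"
    unfolding e using m1 m2 by simp
qed

lemma K_meas_d: "K \<in> density lborel (\<lambda>x. ennreal (p x)) \<rightarrow>\<^sub>M subprob_algebra borel"
proof -
  have "sets (density lborel (\<lambda>x. ennreal (p x))) = sets lborel" by simp
  from measurable_cong_sets[OF this refl, of "subprob_algebra borel"] K_meas_lb
  show ?thesis by simp
qed

lemma J_nn:
  assumes h: "h \<in> borel_measurable (borel :: ('a\<times>'a) measure)"
  shows "(\<integral>\<^sup>+ z. h z \<partial>noisy_joint \<beta> p q) = (\<integral>\<^sup>+ x. ennreal (p x) *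
     (ennreal \<beta> * h (x, x) + ennreal (1 - \<beta>) * (\<integral>\<^sup>+ y. ennreal (q x y) * h (x, y) \<partial>lborel)) \<partial>lborel)"
proof -
  have "(\<integral>\<^sup>+ z. h z \<partial>noisy_joint \<beta> p q) = (\<integral>\<^sup>+ x. \<integral>\<^sup>+ z. h z \<partial>K x \<partial>density lborel (\<lambda>x. ennreal (p x)))"
    unfolding J_def by (rule nn_integral_bind[OF h K_meas_d])
  also have "\<dots> = (\<integral>\<^sup>+ x. ennreal (p x) * \<integral>\<^sup>+ z. h z \<partial>K x \<partial>lborel)"
  proof (rule nn_integral_density)
    show "(\<lambda>x. \<integral>\<^sup>+ z. h z \<partial>K x) \<in> borel_measurable lborel"
      using measurable_compose[OF K_meas_lb nn_integral_measurable_subprob_algebra[OF h]] .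
  qed simp
  finally show ?thesis by (simp add: K_nn[OF h])
qed

lemma fst_meas: "fst \<in> (borel :: ('a\<times>'a) measure) \<rightarrow>\<^sub>M (borel :: 'a measure)"
  using measurable_fst[of "lborel :: 'a measure" "lborel :: 'a measure"]
    unfolding measurable_cong_sets[OF sets_lb2 sets_lborel] .

lemma snd_meas: "snd \<in> (borel :: ('a\<times>'a) measure) \<rightarrow>\<^sub>M (borel :: 'a measure)"
  using measurable_snd[of "lborel :: 'a measure" "lborel :: 'a measure"]
    unfolding measurable_cong_sets[OF sets_lb2 sets_lborel] .

lemma pq_meas: "(\<lambda>z. p (fst z) * q (fst z) (snd z)) \<in> borel_measurable (borel :: ('a\<times>'a) measure)"
proof -
  have "(\<lambda>z. p (fst z)) \<in> borel_measurable (borel :: ('a\<times>'a) measure)"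
    using measurable_compose[OF fst_meas p_meas] .
  moreover have "(\<lambda>z. q (fst z) (snd z)) \<in> borel_measurable (borel :: ('a\<times>'a) measure)"
    using q_meas by (simp add: case_prod_beta')
  ultimately show ?thesis by (rule borel_measurable_times)
qed

lemma F_meas:
  assumes h: "h \<in> borel_measurable (borel :: ('a\<times>'a) measure)"
  shows "(\<lambda>(x, y). ennreal (p x * q x y) * h (x, y)) \<in> borel_measurable (lborel \<Otimes>\<^sub>M lborel)"
proof -
  have "(\<lambda>z. ennreal (p (fst z) * q (fst z) (snd z)) * h z) \<in> borel_measurable (borel :: ('a\<times>'a) measure)"
    using pq_meas h by (intro borel_measurable_times_ennreal) auto
  then show ?thesis by (intro meas_lb2) (simp add: case_prod_beta')
qed

lemma J_gen:
  assumes h: "h \<in> borel_measurable (borel :: ('a\<times>'a) measure)"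
  shows "(\<integral>\<^sup>+ z. h z \<partial>noisy_joint \<beta> p q) =
    (\<integral>\<^sup>+ y. ennreal \<beta> * (ennreal (p y) * h (y, y)) \<partial>lborel) +
    ennreal (1 - \<beta>) * (\<integral>\<^sup>+ y. \<integral>\<^sup>+ x. ennreal (p x * q x y) * h (x, y) \<partial>lborel \<partial>lborel)"
proof -
  have hd: "(\<lambda>x. h (x, x)) \<in> borel_measurable lborel"
    using measurable_compose[OF diag_meas h] by simp
  have Fm: "(\<lambda>x. \<integral>\<^sup>+ y. ennreal (p x * q x y) * h (x, y) \<partial>lborel) \<in> borel_measurable lborel"
    using lborel.borel_measurable_nn_integral[OF F_meas[OF h]] .
  have "(\<integral>\<^sup>+ z. h z \<partial>noisy_joint \<beta> p q) = (\<integral>\<^sup>+ x. ennreal \<beta> * (ennreal (p x) * h (x, x)) +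
     ennreal (1 - \<beta>) * (\<integral>\<^sup>+ y. ennreal (p x * q x y) * h (x, y) \<partial>lborel) \<partial>lborel)"
    unfolding J_nn[OF h]
  proof (rule nn_integral_cong)
    fix x
    have eq1: "ennreal (p x) * (\<integral>\<^sup>+ y. ennreal (q x y) * h (x, y) \<partial>lborel) = (\<integral>\<^sup>+ y. ennreal (p x * q x y) * h (x, y) \<partial>lborel)"
      by (subst nn_integral_cmult[symmetric]) (use measurable_compose[OF Pair_meas h] in \<open>auto simp: ennreal_mult p_nonneg q_nonneg mult.assoc\<close>)
    have "ennreal (p x) * (ennreal \<beta> * h (x, x) + ennreal (1 - \<beta>) * (\<integral>\<^sup>+ y. ennreal (q x y) * h (x, y) \<partial>lborel)) =
         ennreal \<beta> * (ennreal (p x) * h (x, x)) + ennreal (1 - \<beta>) * (ennreal (p x) * (\<integral>\<^sup>+ y. ennreal (q x y) * h (x, y) \<partial>lborel))"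
      by (simp add: distrib_left ac_simps)
    then show "ennreal (p x) * (ennreal \<beta> * h (x, x) + ennreal (1 - \<beta>) * (\<integral>\<^sup>+ y. ennreal (q x y) * h (x, y) \<partial>lborel)) =
         ennreal \<beta> * (ennreal (p x) * h (x, x)) + ennreal (1 - \<beta>) * (\<integral>\<^sup>+ y. ennreal (p x * q x y) * h (x, y) \<partial>lborel)"
      using eq1 by simp
  qed
  also have "\<dots> = (\<integral>\<^sup>+ x. ennreal \<beta> * (ennreal (p x) * h (x, x)) \<partial>lborel) +
     (\<integral>\<^sup>+ x. ennreal (1 - \<beta>) * (\<integral>\<^sup>+ y. ennreal (p x * q x y) * h (x, y) \<partial>lborel) \<partial>lborel)"
    by (rule nn_integral_add) (use hd Fm p_meas' in auto)
  also have "(\<integral>\<^sup>+ x. ennreal (1 - \<beta>) * (\<integral>\<^sup>+ y. ennreal (p x * q x y) * h (x, y) \<partial>lborel) \<partial>lborel)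
      = ennreal (1 - \<beta>) * (\<integral>\<^sup>+ x. \<integral>\<^sup>+ y. ennreal (p x * q x y) * h (x, y) \<partial>lborel \<partial>lborel)"
    by (rule nn_integral_cmult[OF Fm])
  also have "(\<integral>\<^sup>+ x. \<integral>\<^sup>+ y. ennreal (p x * q x y) * h (x, y) \<partial>lborel \<partial>lborel)
      = (\<integral>\<^sup>+ y. \<integral>\<^sup>+ x. ennreal (p x * q x y) * h (x, y) \<partial>lborel \<partial>lborel)"
    using lborel_pair.Fubini'[OF F_meas[OF h]] by simp
  finally show ?thesis .
qed

lemma Fy_meas:
  assumes h: "h \<in> borel_measurable (borel :: ('a\<times>'a) measure)"
  shows "(\<lambda>y. \<integral>\<^sup>+ x. ennreal (p x * q x y) * h (x, y) \<partial>lborel) \<in> borel_measurable lborel"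
proof -
  have "(\<lambda>(y, x). ennreal (p x * q x y) * h (x, y)) \<in> borel_measurable (lborel \<Otimes>\<^sub>M lborel)"
    using measurable_pair_swap[OF F_meas[OF h]] by (simp add: case_prod_beta')
  then show ?thesis by (rule lborel.borel_measurable_nn_integral)
qed

lemma p_int: "integrable lborel p"
  using p_prob p_nonneg by (intro integrableI_nonneg) auto

lemma p_int2: "integrable lborel (\<lambda>x. p x * (norm x)\<^sup>2)"
  using p_second_moment integrable_density[of "\<lambda>x. (norm x)\<^sup>2" lborel p] p_nonneg by simp

lemma h1_meas: "(\<lambda>z. ennreal (1 + (norm (fst z))\<^sup>2)) \<in> borel_measurable (borel :: ('a\<times>'a) measure)"
  using measurable_compose[OF fst_meas, of "\<lambda>x. ennreal (1 + (norm x)\<^sup>2)"] by simp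

lemma good_AE: "AE y in lborel. (\<integral>\<^sup>+ x. ennreal (p x * q x y) * ennreal (1 + (norm x)\<^sup>2) \<partial>lborel) \<noteq> \<infinity>"
proof (rule nn_integral_PInf_AE)
  show "(\<lambda>y. \<integral>\<^sup>+ x. ennreal (p x * q x y) * ennreal (1 + (norm x)\<^sup>2) \<partial>lborel) \<in> borel_measurable lborel"
    using Fy_meas[OF h1_meas] by simp
  have "(\<integral>\<^sup>+ y. \<integral>\<^sup>+ x. ennreal (p x * q x y) * ennreal (1 + (norm x)\<^sup>2) \<partial>lborel \<partial>lborel)
     = (\<integral>\<^sup>+ x. \<integral>\<^sup>+ y. ennreal (p x * q x y) * ennreal (1 + (norm x)\<^sup>2) \<partial>lborel \<partial>lborel)"
    using lborel_pair.Fubini'[OF F_meas[OF h1_meas]] by simp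
  also have "\<dots> = (\<integral>\<^sup>+ x. ennreal (p x + p x * (norm x)\<^sup>2) \<partial>lborel)"
  proof (rule nn_integral_cong)
    fix x
    have "(\<integral>\<^sup>+ y. ennreal (p x * q x y) * ennreal (1 + (norm x)\<^sup>2) \<partial>lborel)
       = (\<integral>\<^sup>+ y. ennreal (p x * (1 + (norm x)\<^sup>2)) * ennreal (q x y) \<partial>lborel)"
      by (intro nn_integral_cong) (simp add: ennreal_mult[symmetric] p_nonneg q_nonneg mult_ac del: ennreal_plus)
    also have "\<dots> = ennreal (p x * (1 + (norm x)\<^sup>2)) * (\<integral>\<^sup>+ y. ennreal (q x y) \<partial>lborel)"
      by (rule nn_integral_cmult) simp
    also have "\<dots> = ennreal (p x + p x * (norm x)\<^sup>2)" by (simp add: q_prob algebra_simps)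
    finally show "(\<integral>\<^sup>+ y. ennreal (p x * q x y) * ennreal (1 + (norm x)\<^sup>2) \<partial>lborel) = ennreal (p x + p x * (norm x)\<^sup>2)" .
  qed
  also have "\<dots> = ennreal (\<integral>x. p x + p x * (norm x)\<^sup>2 \<partial>lborel)"
    using p_int p_int2 p_nonneg by (intro nn_integral_eq_integral) auto
  finally show "(\<integral>\<^sup>+ y. \<integral>\<^sup>+ x. ennreal (p x * q x y) * ennreal (1 + (norm x)\<^sup>2) \<partial>lborel \<partial>lborel) \<noteq> \<infinity>"
    by simp
qed

definition good :: "'a \<Rightarrow> bool" where
  "good y \<longleftrightarrow> integrable lborel (\<lambda>x. p x * q x y) \<and> integrable lborel (\<lambda>x. p x * q x y * (norm x)\<^sup>2)"

lemma le_mult1: "0 \<le> (a::real) \<Longrightarrow> 0 \<le> b \<Longrightarrow> a \<le> a * (1 + b)"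
  by (simp add: algebra_simps)

lemma good_AE': "AE y in lborel. good y"
  using good_AE
proof eventually_elim
  case (elim y)
  have m: "(\<lambda>x. p x * q x y) \<in> borel_measurable lborel" using p_meas' q_meas_x by simp
  have b1: "(\<integral>\<^sup>+ x. ennreal (norm (p x * q x y)) \<partial>lborel) \<le> (\<integral>\<^sup>+ x. ennreal (p x * q x y) * ennreal (1 + (norm x)\<^sup>2) \<partial>lborel)"
    by (intro nn_integral_mono) (simp add: p_nonneg q_nonneg ennreal_mult[symmetric] le_mult1 del: ennreal_plus)
  have b2: "(\<integral>\<^sup>+ x. ennreal (norm (p x * q x y * (norm x)\<^sup>2)) \<partial>lborel) \<le> (\<integral>\<^sup>+ x. ennreal (p x * q x y) * ennreal (1 + (norm x)\<^sup>2) \<partial>lborel)"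
    by (intro nn_integral_mono) (simp add: p_nonneg q_nonneg ennreal_mult[symmetric] mult_left_mono del: ennreal_plus)
  show "good y" unfolding good_def
    using b1 b2 elim m by (auto intro!: integrableI_bounded simp: top.not_eq_extremum le_less_trans)
qed

definition mm :: "'a \<Rightarrow> 'a" where "mm y = (\<integral>x. (q x y * p x) *\<^sub>R x \<partial>lborel)"
definition SS :: "'a \<Rightarrow> real" where "SS y = (\<integral>x. p x * q x y * (norm x)\<^sup>2 \<partial>lborel)"
definition QQ :: "'a \<Rightarrow> real" where "QQ y = q_marg p q y"
definition DD :: "'a \<Rightarrow> real" where "DD y = \<beta> * p y + (1 - \<beta>) * QQ y"

lemma QQ_nonneg: "0 \<le> QQ y"
  unfolding QQ_def q_marg_def by (intro integral_nonneg_AE) (simp add: p_nonneg q_nonneg)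

lemma DD_nonneg: "0 \<le> DD y"
  unfolding DD_def using beta p_nonneg[of y] QQ_nonneg[of y] by simp

lemma good_int1: "good y \<Longrightarrow> integrable lborel (\<lambda>x. q x y * p x)"
  unfolding good_def by (simp add: mult.commute)

lemma good_int_m: assumes "good y" shows "integrable lborel (\<lambda>x. (q x y * p x) *\<^sub>R x)"
proof (rule Bochner_Integration.integrable_bound)
  show "integrable lborel (\<lambda>x. p x * q x y + p x * q x y * (norm x)\<^sup>2)"
    using assms unfolding good_def by auto
  show "(\<lambda>x. (q x y * p x) *\<^sub>R x) \<in> borel_measurable lborel"
    using q_meas_x p_meas' by (intro borel_measurable_scaleR borel_measurable_times) auto
  show "AE x in lborel. norm ((q x y * p x) *\<^sub>R x) \<le> norm (p x * q x y + p x * q x y * (norm x)\<^sup>2)"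
  proof (rule AE_I2)
    fix x
    have w: "0 \<le> p x * q x y" using p_nonneg q_nonneg by simp
    have n: "norm x \<le> 1 + (norm x)\<^sup>2"
      by (rule le_1_sq)
    have "norm ((q x y * p x) *\<^sub>R x) = (p x * q x y) * norm x" using w by (simp add: mult.commute)
    also have "\<dots> \<le> (p x * q x y) * (1 + (norm x)\<^sup>2)" by (rule mult_left_mono[OF n w])
    also have "\<dots> = norm (p x * q x y + p x * q x y * (norm x)\<^sup>2)"
    proof -
      have "0 \<le> p x * q x y * (norm x)\<^sup>2" using w by simp
      then have "0 \<le> p x * q x y + p x * q x y * (norm x)\<^sup>2" using w by linarith
      then show ?thesis by (simp add: algebra_simps)
    qed
    finally show "norm ((q x y * p x) *\<^sub>R x) \<le> norm (p x * q x y + p x * q x y * (norm x)\<^sup>2)" .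
  qed
qed

lemma pw_int:
  assumes g: "good y"
  shows "integrable lborel (\<lambda>x. p x * q x y * (norm (v - x))\<^sup>2)"
    and "(\<integral>x. p x * q x y * (norm (v - x))\<^sup>2 \<partial>lborel) = QQ y * (norm v)\<^sup>2 - 2 * (v \<bullet> mm y) + SS y"
proof -
  have eq: "p x * q x y * (norm (v - x))\<^sup>2 = (q x y * p x) * (norm v)\<^sup>2 - 2 * (v \<bullet> ((q x y * p x) *\<^sub>R x)) + p x * q x y * (norm x)\<^sup>2" for x
  proof -
    have "(norm (v - x))\<^sup>2 = (norm v)\<^sup>2 - 2 * (v \<bullet> x) + (norm x)\<^sup>2"
      by (simp add: power2_norm_eq_inner inner_diff_left inner_diff_right inner_commute)
    note nn = this
    show ?thesis unfolding nn by (simp add: algebra_simps)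
  qed
  have i1: "integrable lborel (\<lambda>x. (q x y * p x) * (norm v)\<^sup>2)" using good_int1[OF g] by simp
  have i2: "integrable lborel (\<lambda>x. 2 * (v \<bullet> ((q x y * p x) *\<^sub>R x)))"
    by (intro integrable_mult_right integrable_inner_right) (rule good_int_m[OF g])
  have i3: "integrable lborel (\<lambda>x. p x * q x y * (norm x)\<^sup>2)" using g unfolding good_def by simp
  show "integrable lborel (\<lambda>x. p x * q x y * (norm (v - x))\<^sup>2)"
    unfolding eq using i1 i2 i3 by auto
  have "(\<integral>x. p x * q x y * (norm (v - x))\<^sup>2 \<partial>lborel) =
     (\<integral>x. (q x y * p x) * (norm v)\<^sup>2 \<partial>lborel) - (\<integral>x. 2 * (v \<bullet> ((q x y * p x) *\<^sub>R x)) \<partial>lborel) + (\<integral>x. p x * q x y * (norm x)\<^sup>2 \<partial>lborel)"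
    unfolding eq using i1 i2 i3 by (simp add: integral_add integral_diff)
  also have "\<dots> = QQ y * (norm v)\<^sup>2 - 2 * (v \<bullet> mm y) + SS y"
  proof -
    have im: "(\<integral>x. v \<bullet> ((q x y * p x) *\<^sub>R x) \<partial>lborel) = v \<bullet> mm y"
      unfolding mm_def by (rule integral_inner_right) (rule good_int_m[OF g])
    have a1: "(\<integral>x. (q x y * p x) * (norm v)\<^sup>2 \<partial>lborel) = QQ y * (norm v)\<^sup>2"
      unfolding QQ_def q_marg_def by (rule integral_mult_left_zero)
    have a2: "(\<integral>x. 2 * (v \<bullet> ((q x y * p x) *\<^sub>R x)) \<partial>lborel) = 2 * (v \<bullet> mm y)"
      by (simp only: integral_mult_right_zero im)
    show ?thesis by (simp only: a1 a2 SS_def)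
  qed
  finally show "(\<integral>x. p x * q x y * (norm (v - x))\<^sup>2 \<partial>lborel) = QQ y * (norm v)\<^sup>2 - 2 * (v \<bullet> mm y) + SS y" .
qed

lemma mm_zero: assumes g: "good y" and Q0: "QQ y = 0" shows "mm y = 0"
proof -
  have "AE x in lborel. q x y * p x = 0"
    using Q0 good_int1[OF g] unfolding QQ_def q_marg_def
    by (subst integral_nonneg_eq_0_iff_AE[symmetric]) (auto simp: p_nonneg q_nonneg)
  then have "AE x in lborel. (q x y * p x) *\<^sub>R x = 0" by eventually_elim simp
  moreover have ms: "(\<lambda>x. (q x y * p x) *\<^sub>R x) \<in> borel_measurable lborel"
    using q_meas_x p_meas' by (intro borel_measurable_scaleR borel_measurable_times) auto
  ultimately have "mm y = (\<integral>x. 0 \<partial>lborel)" unfolding mm_def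
    using integral_cong_AE[of "\<lambda>x. (q x y * p x) *\<^sub>R x" lborel "\<lambda>x. 0"] by simp
  then show ?thesis by simp
qed

lemma fs_eq:
  assumes g: "good y"
  shows "DD y *\<^sub>R f_star \<beta> p q y = (\<beta> * p y) *\<^sub>R y + (1 - \<beta>) *\<^sub>R mm y"
proof -
  have fs: "f_star \<beta> p q y = omega \<beta> p q y *\<^sub>R y + (1 - omega \<beta> p q y) *\<^sub>R ((1 / QQ y) *\<^sub>R mm y)"
    unfolding f_star_def g_star_def QQ_def mm_def ..
  have om: "omega \<beta> p q y = p y / (p y + ((1 - \<beta>) / \<beta>) * QQ y)"
    unfolding omega_def QQ_def ..
  have py: "0 \<le> p y" by (rule p_nonneg)
  have Qn: "0 \<le> QQ y" by (rule QQ_nonneg)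
  show ?thesis
  proof (cases "QQ y = 0")
    case True
    then have m0: "mm y = 0" by (rule mm_zero[OF g])
    show ?thesis
    proof (cases "p y = 0")
      case True
      then have "DD y = 0" using \<open>QQ y = 0\<close> unfolding DD_def by simp
      then show ?thesis using True m0 by simp
    next
      case False
      then have "omega \<beta> p q y = 1" using om \<open>QQ y = 0\<close> by simp
      then show ?thesis using fs m0 \<open>QQ y = 0\<close> unfolding DD_def by simp
    qed
  next
    case False
    then have Qp: "0 < QQ y" using Qn by simp
    define A where "A = p y + ((1 - \<beta>) / \<beta>) * QQ y"
    have Ap: "0 < A" unfolding A_def using Qp py beta by (simp add: add_nonneg_pos)
    have DA: "DD y = \<beta> * A" unfolding DD_def A_def using beta by (simp add: field_simps)
    have s1: "DD y * omega \<beta> p q y = \<beta> * p y"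
      unfolding om A_def[symmetric] DA using Ap by simp
    have e1: "1 - p y / A = (A - p y) / A" using Ap by (simp add: field_simps)
    have e2: "A - p y = ((1 - \<beta>) / \<beta>) * QQ y" unfolding A_def by simp
    have s2: "DD y * ((1 - omega \<beta> p q y) * (1 / QQ y)) = 1 - \<beta>"
      unfolding om A_def[symmetric] DA e1 e2 using Ap Qp beta by (simp add: field_simps)
    show ?thesis unfolding fs scaleR_add_right scaleR_scaleR s1 s2 ..
  qed
qed

lemma quad_y:
  assumes g: "good y"
  shows "\<beta> * p y * (norm (v - y))\<^sup>2 + (1 - \<beta>) * (QQ y * (norm v)\<^sup>2 - 2 * (v \<bullet> mm y) + SS y)
       = \<beta> * p y * (norm (f_star \<beta> p q y - y))\<^sup>2 + (1 - \<beta>) * (QQ y * (norm (f_star \<beta> p q y))\<^sup>2 - 2 * (f_star \<beta> p q y \<bullet> mm y) + SS y)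
         + DD y * (norm (v - f_star \<beta> p q y))\<^sup>2"
  by (rule quad[OF DD_def fs_eq[OF g]])

definition II :: "('a \<times> 'a \<Rightarrow> ennreal) \<Rightarrow> 'a \<Rightarrow> ennreal" where
  "II h y = ennreal \<beta> * (ennreal (p y) * h (y, y)) + ennreal (1 - \<beta>) * (\<integral>\<^sup>+ x. ennreal (p x * q x y) * h (x, y) \<partial>lborel)"

lemma II_meas:
  assumes h: "h \<in> borel_measurable (borel :: ('a\<times>'a) measure)"
  shows "II h \<in> borel_measurable lborel"
proof -
  have hd: "(\<lambda>x. h (x, x)) \<in> borel_measurable lborel"
    using measurable_compose[OF diag_meas h] by simp
  show ?thesis unfolding II_def[abs_def] using hd Fy_meas[OF h] p_meas' by simp
qed

lemma J_gen2:
  assumes h: "h \<in> borel_measurable (borel :: ('a\<times>'a) measure)"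
  shows "(\<integral>\<^sup>+ z. h z \<partial>noisy_joint \<beta> p q) = (\<integral>\<^sup>+ y. II h y \<partial>lborel)"
proof -
  have hd: "(\<lambda>x. h (x, x)) \<in> borel_measurable lborel"
    using measurable_compose[OF diag_meas h] by simp
  have "(\<integral>\<^sup>+ y. II h y \<partial>lborel) = (\<integral>\<^sup>+ y. ennreal \<beta> * (ennreal (p y) * h (y, y)) \<partial>lborel) +
      (\<integral>\<^sup>+ y. ennreal (1 - \<beta>) * (\<integral>\<^sup>+ x. ennreal (p x * q x y) * h (x, y) \<partial>lborel) \<partial>lborel)"
    unfolding II_def by (rule nn_integral_add) (use hd Fy_meas[OF h] p_meas' in auto)
  also have "(\<integral>\<^sup>+ y. ennreal (1 - \<beta>) * (\<integral>\<^sup>+ x. ennreal (p x * q x y) * h (x, y) \<partial>lborel) \<partial>lborel)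
     = ennreal (1 - \<beta>) * (\<integral>\<^sup>+ y. \<integral>\<^sup>+ x. ennreal (p x * q x y) * h (x, y) \<partial>lborel \<partial>lborel)"
    by (rule nn_integral_cmult[OF Fy_meas[OF h]])
  finally show ?thesis using J_gen[OF h] by simp
qed

lemma hmeas:
  assumes f: "f \<in> borel_measurable (borel :: 'a measure)" and g: "g \<in> (borel :: ('a\<times>'a) measure) \<rightarrow>\<^sub>M (borel :: 'a measure)"
  shows "(\<lambda>z. ennreal ((norm (f (snd z) - g z))\<^sup>2)) \<in> borel_measurable (borel :: ('a\<times>'a) measure)"
proof -
  have "(\<lambda>z. f (snd z)) \<in> (borel :: ('a\<times>'a) measure) \<rightarrow>\<^sub>M (borel :: 'a measure)"
    using measurable_compose[OF snd_meas f] .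
  then have "(\<lambda>z. f (snd z) - g z) \<in> (borel :: ('a\<times>'a) measure) \<rightarrow>\<^sub>M (borel :: 'a measure)"
    using g by (rule borel_measurable_diff)
  then show ?thesis by simp
qed

definition phi :: "'a \<Rightarrow> 'a \<Rightarrow> real" where
  "phi y v = \<beta> * p y * (norm (v - y))\<^sup>2 + (1 - \<beta>) * (QQ y * (norm v)\<^sup>2 - 2 * (v \<bullet> mm y) + SS y)"

lemma II_phi:
  assumes g: "good y"
  shows "II (\<lambda>z. ennreal ((norm (f (snd z) - fst z))\<^sup>2)) y = ennreal (phi y (f y))"
    and "0 \<le> phi y (f y)"
proof -
  let ?v = "f y"
  have i0: "0 \<le> (\<integral>x. p x * q x y * (norm (?v - x))\<^sup>2 \<partial>lborel)"
    by (intro integral_nonneg_AE) (simp add: p_nonneg q_nonneg)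
  have "(\<integral>\<^sup>+ x. ennreal (p x * q x y) * ennreal ((norm (?v - x))\<^sup>2) \<partial>lborel)
      = (\<integral>\<^sup>+ x. ennreal (p x * q x y * (norm (?v - x))\<^sup>2) \<partial>lborel)"
    by (intro nn_integral_cong) (simp add: ennreal_mult p_nonneg q_nonneg)
  also have "\<dots> = ennreal (\<integral>x. p x * q x y * (norm (?v - x))\<^sup>2 \<partial>lborel)"
    by (rule nn_integral_eq_integral[OF pw_int(1)[OF g]]) (simp add: p_nonneg q_nonneg)
  finally have e: "(\<integral>\<^sup>+ x. ennreal (p x * q x y) * ennreal ((norm (?v - x))\<^sup>2) \<partial>lborel)
      = ennreal (QQ y * (norm ?v)\<^sup>2 - 2 * (?v \<bullet> mm y) + SS y)"
    using pw_int(2)[OF g] by simp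
  have n1: "0 \<le> \<beta> * p y * (norm (?v - y))\<^sup>2" using beta p_nonneg[of y] by simp
  have n2: "0 \<le> (1 - \<beta>) * (QQ y * (norm ?v)\<^sup>2 - 2 * (?v \<bullet> mm y) + SS y)"
    using beta i0 pw_int(2)[OF g] by simp
  show "0 \<le> phi y (f y)" unfolding phi_def using n1 n2 by linarith
  have "II (\<lambda>z. ennreal ((norm (f (snd z) - fst z))\<^sup>2)) y
     = ennreal (\<beta> * p y * (norm (?v - y))\<^sup>2) + ennreal ((1 - \<beta>) * (QQ y * (norm ?v)\<^sup>2 - 2 * (?v \<bullet> mm y) + SS y))"
    unfolding II_def using e beta i0 pw_int(2)[OF g] p_nonneg[of y]
    by (simp add: ennreal_mult[symmetric] mult.assoc)
  also have "\<dots> = ennreal (phi y (f y))" unfolding phi_def using n1 n2 by (simp add: ennreal_plus)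
  finally show "II (\<lambda>z. ennreal ((norm (f (snd z) - fst z))\<^sup>2)) y = ennreal (phi y (f y))" .
qed

lemma II_D:
  assumes g: "good y"
  shows "II (\<lambda>z. ennreal ((norm (f (snd z) - f_star \<beta> p q (snd z)))\<^sup>2)) y = ennreal (DD y * (norm (f y - f_star \<beta> p q y))\<^sup>2)"
proof -
  let ?c = "(norm (f y - f_star \<beta> p q y))\<^sup>2"
  have "(\<integral>\<^sup>+ x. ennreal (p x * q x y) * ennreal ?c \<partial>lborel) = (\<integral>\<^sup>+ x. ennreal (p x * q x y) \<partial>lborel) * ennreal ?c"
    by (rule nn_integral_multc) (use p_meas' q_meas_x in simp)
  also have "(\<integral>\<^sup>+ x. ennreal (p x * q x y) \<partial>lborel) = ennreal (QQ y)"
  proof -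
    have "(\<integral>\<^sup>+ x. ennreal (p x * q x y) \<partial>lborel) = ennreal (\<integral>x. p x * q x y \<partial>lborel)"
      using g unfolding good_def by (intro nn_integral_eq_integral) (auto simp: p_nonneg q_nonneg)
    then show ?thesis unfolding QQ_def q_marg_def by (simp add: mult.commute)
  qed
  finally have e: "(\<integral>\<^sup>+ x. ennreal (p x * q x y) * ennreal ?c \<partial>lborel) = ennreal (QQ y) * ennreal ?c" .
  have c0: "0 \<le> ?c" by simp
  have a: "ennreal \<beta> * (ennreal (p y) * ennreal ?c) = ennreal (\<beta> * p y * ?c)"
    using beta p_nonneg[of y] by (simp add: ennreal_mult mult.assoc)
  have b: "ennreal (1 - \<beta>) * (ennreal (QQ y) * ennreal ?c) = ennreal ((1 - \<beta>) * QQ y * ?c)"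
    using beta QQ_nonneg[of y] by (simp add: ennreal_mult mult.assoc)
  have "II (\<lambda>z. ennreal ((norm (f (snd z) - f_star \<beta> p q (snd z)))\<^sup>2)) y
      = ennreal (\<beta> * p y * ?c) + ennreal ((1 - \<beta>) * QQ y * ?c)"
    unfolding II_def e[symmetric] a[symmetric] b[symmetric] by simp
  also have "\<dots> = ennreal (\<beta> * p y * ?c + (1 - \<beta>) * QQ y * ?c)"
    using beta QQ_nonneg[of y] p_nonneg[of y] by (simp add: ennreal_plus)
  also have "\<beta> * p y * ?c + (1 - \<beta>) * QQ y * ?c = DD y * ?c" unfolding DD_def by (simp add: algebra_simps)
  finally show ?thesis .
qed

lemma swap_meas: "(\<lambda>(y, x). q x y * p x) \<in> borel_measurable (lborel \<Otimes>\<^sub>M lborel)"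
proof -
  have "(\<lambda>z. p (fst z) * q (fst z) (snd z)) \<in> borel_measurable (lborel \<Otimes>\<^sub>M lborel)"
    using meas_lb2[OF pq_meas] .
  from measurable_pair_swap[OF this] show ?thesis by (simp add: case_prod_beta' mult.commute)
qed

lemma QQ_meas: "QQ \<in> borel_measurable lborel"
  unfolding QQ_def[abs_def] q_marg_def using lborel.borel_measurable_lebesgue_integral[OF swap_meas] by simp

lemma mm_meas: "mm \<in> borel_measurable lborel"
proof -
  have "(\<lambda>(y, x). (q x y * p x) *\<^sub>R x) \<in> borel_measurable (lborel \<Otimes>\<^sub>M lborel)"
  proof -
    have "(\<lambda>z. (\<lambda>(y, x). q x y * p x) z *\<^sub>R snd z) \<in> borel_measurable (lborel \<Otimes>\<^sub>M lborel)"
    proof (rule borel_measurable_scaleR[OF swap_meas])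
      show "snd \<in> borel_measurable (lborel \<Otimes>\<^sub>M lborel :: ('a \<times> 'a) measure)"
        using measurable_snd[of "lborel::'a measure" "lborel::'a measure"]
        unfolding measurable_cong_sets[OF refl sets_lborel] .
    qed
    then show ?thesis by (simp add: case_prod_beta')
  qed
  then show ?thesis unfolding mm_def[abs_def] using lborel.borel_measurable_lebesgue_integral by blast
qed

lemma fs_meas: "f_star \<beta> p q \<in> borel_measurable borel"
proof -
  have Q: "(\<lambda>y. q_marg p q y) \<in> borel_measurable borel" using QQ_meas unfolding QQ_def by simp
  have m: "(\<lambda>y. (\<integral>x. (q x y * p x) *\<^sub>R x \<partial>lborel)) \<in> borel_measurable borel" using mm_meas unfolding mm_def by simp
  have om: "omega \<beta> p q \<in> borel_measurable borel"
    unfolding omega_def[abs_def] using Q p_meas by measurable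
  have g: "g_star p q \<in> borel_measurable borel"
    unfolding g_star_def[abs_def] using Q m by measurable
  show ?thesis unfolding f_star_def[abs_def] using om g by measurable
qed

lemma J_sets: "sets (noisy_joint \<beta> p q) = sets (borel :: ('a\<times>'a) measure)"
  unfolding J_def by (rule sets_bind) (auto simp: K_sets)

lemma J_meas_iff: "(f \<in> borel_measurable (noisy_joint \<beta> p q)) = (f \<in> borel_measurable (borel :: ('a\<times>'a) measure))"
  unfolding measurable_cong_sets[OF J_sets refl] by (rule refl)

lemma fs_snd_meas: "(\<lambda>z. f_star \<beta> p q (snd z)) \<in> (borel :: ('a\<times>'a) measure) \<rightarrow>\<^sub>M (borel :: 'a measure)"
  using measurable_compose[OF snd_meas fs_meas] .

lemma decomp:
  assumes f: "f \<in> borel_measurable (borel :: 'a measure)"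
  shows "(\<integral>\<^sup>+ z. ennreal ((norm (f (snd z) - fst z))\<^sup>2) \<partial>noisy_joint \<beta> p q)
    = (\<integral>\<^sup>+ z. ennreal ((norm (f_star \<beta> p q (snd z) - fst z))\<^sup>2) \<partial>noisy_joint \<beta> p q)
    + (\<integral>\<^sup>+ z. ennreal ((norm (f (snd z) - f_star \<beta> p q (snd z)))\<^sup>2) \<partial>noisy_joint \<beta> p q)"
proof -
  let ?hf = "\<lambda>z. ennreal ((norm (f (snd z) - fst z))\<^sup>2)"
  let ?hs = "\<lambda>z. ennreal ((norm (f_star \<beta> p q (snd z) - fst z))\<^sup>2)"
  let ?hd = "\<lambda>z::'a\<times>'a. ennreal ((norm (f (snd z) - f_star \<beta> p q (snd z)))\<^sup>2)"
  have mf: "?hf \<in> borel_measurable borel" by (rule hmeas[OF f fst_meas])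
  have ms: "?hs \<in> borel_measurable borel" by (rule hmeas[OF fs_meas fst_meas])
  have md: "?hd \<in> borel_measurable borel" by (rule hmeas[where g="\<lambda>z. f_star \<beta> p q (snd z)", OF f fs_snd_meas])
  have "(\<integral>\<^sup>+ z. ?hf z \<partial>noisy_joint \<beta> p q) = (\<integral>\<^sup>+ y. II ?hf y \<partial>lborel)" by (rule J_gen2[OF mf])
  also have "\<dots> = (\<integral>\<^sup>+ y. II ?hs y + II ?hd y \<partial>lborel)"
  proof (rule nn_integral_cong_AE)
    show "AE y in lborel. II ?hf y = II ?hs y + II ?hd y"
      using good_AE'
    proof eventually_elim
      case (elim y)
      have "II ?hf y = ennreal (phi y (f y))" by (rule II_phi(1)[OF elim])
      also have "phi y (f y) = phi y (f_star \<beta> p q y) + DD y * (norm (f y - f_star \<beta> p q y))\<^sup>2"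
        unfolding phi_def by (rule quad_y[OF elim])
      also have "ennreal \<dots> = ennreal (phi y (f_star \<beta> p q y)) + ennreal (DD y * (norm (f y - f_star \<beta> p q y))\<^sup>2)"
        using II_phi(2)[OF elim, of "f_star \<beta> p q"] DD_nonneg[of y] by (simp add: ennreal_plus)
      also have "ennreal (phi y (f_star \<beta> p q y)) = II ?hs y" by (rule II_phi(1)[OF elim, symmetric])
      also have "ennreal (DD y * (norm (f y - f_star \<beta> p q y))\<^sup>2) = II ?hd y" by (rule II_D[OF elim, symmetric])
      finally show ?case .
    qed
  qed
  also have "\<dots> = (\<integral>\<^sup>+ y. II ?hs y \<partial>lborel) + (\<integral>\<^sup>+ y. II ?hd y \<partial>lborel)"
    by (rule nn_integral_add) (use II_meas[OF ms] II_meas[OF md] in auto)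
  also have "\<dots> = (\<integral>\<^sup>+ z. ?hs z \<partial>noisy_joint \<beta> p q) + (\<integral>\<^sup>+ z. ?hd z \<partial>noisy_joint \<beta> p q)"
    using J_gen2[OF ms] J_gen2[OF md] by simp
  finally show ?thesis .
qed

lemma R0_fin: "(\<integral>\<^sup>+ z. ennreal ((norm (fst z))\<^sup>2) \<partial>noisy_joint \<beta> p q) < \<infinity>"
proof -
  have m: "(\<lambda>z. ennreal ((norm (fst z))\<^sup>2)) \<in> borel_measurable (borel :: ('a\<times>'a) measure)"
  proof -
    have "(\<lambda>x. ennreal ((norm x)\<^sup>2)) \<in> borel_measurable (borel :: 'a measure)" by simp
    from measurable_compose[OF fst_meas this] show ?thesis by simp
  qed
  have "(\<integral>\<^sup>+ z. ennreal ((norm (fst z))\<^sup>2) \<partial>noisy_joint \<beta> p q) = (\<integral>\<^sup>+ x. ennreal (p x) * ennreal ((norm x)\<^sup>2) \<partial>lborel)"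
    unfolding J_nn[OF m]
  proof (intro nn_integral_cong)
    fix x
    have "(\<integral>\<^sup>+ y. ennreal (q x y) * ennreal ((norm (fst (x, y)))\<^sup>2) \<partial>lborel) = (\<integral>\<^sup>+ y. ennreal (q x y) \<partial>lborel) * ennreal ((norm x)\<^sup>2)"
      by simp (rule nn_integral_multc, simp)
    also have "\<dots> = ennreal ((norm x)\<^sup>2)" by (simp add: q_prob)
    finally have e: "(\<integral>\<^sup>+ y. ennreal (q x y) * ennreal ((norm (fst (x, y)))\<^sup>2) \<partial>lborel) = ennreal ((norm x)\<^sup>2)" .
    have "ennreal \<beta> * ennreal ((norm x)\<^sup>2) + ennreal (1 - \<beta>) * ennreal ((norm x)\<^sup>2) = (ennreal \<beta> + ennreal (1 - \<beta>)) * ennreal ((norm x)\<^sup>2)"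
      by (simp add: distrib_right)
    also have "ennreal \<beta> + ennreal (1 - \<beta>) = 1" using beta by (simp add: ennreal_plus[symmetric] del: ennreal_plus)
    finally show "ennreal (p x) * (ennreal \<beta> * ennreal ((norm (fst (x, x)))\<^sup>2) + ennreal (1 - \<beta>) * (\<integral>\<^sup>+ y. ennreal (q x y) * ennreal ((norm (fst (x, y)))\<^sup>2) \<partial>lborel))
       = ennreal (p x) * ennreal ((norm x)\<^sup>2)" using e by simp
  qed
  also have "\<dots> = (\<integral>\<^sup>+ x. ennreal (p x * (norm x)\<^sup>2) \<partial>lborel)"
    by (intro nn_integral_cong) (simp add: ennreal_mult p_nonneg)
  also have "\<dots> = ennreal (\<integral>x. p x * (norm x)\<^sup>2 \<partial>lborel)"
    by (rule nn_integral_eq_integral[OF p_int2]) (simp add: p_nonneg)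
  finally show ?thesis by simp
qed

lemma hmeas_r:
  assumes f: "f \<in> borel_measurable (borel :: 'a measure)" and g: "g \<in> (borel :: ('a\<times>'a) measure) \<rightarrow>\<^sub>M (borel :: 'a measure)"
  shows "(\<lambda>z. (norm (f (snd z) - g z))\<^sup>2) \<in> borel_measurable (borel :: ('a\<times>'a) measure)"
proof -
  have "(\<lambda>z. f (snd z)) \<in> (borel :: ('a\<times>'a) measure) \<rightarrow>\<^sub>M (borel :: 'a measure)"
    using measurable_compose[OF snd_meas f] .
  then have "(\<lambda>z. f (snd z) - g z) \<in> (borel :: ('a\<times>'a) measure) \<rightarrow>\<^sub>M (borel :: 'a measure)"
    using g by (rule borel_measurable_diff)
  then show ?thesis by simp
qed

lemma sq_le2: "(norm (a - b :: 'a))\<^sup>2 \<le> 2 * (norm a)\<^sup>2 + 2 * (norm b)\<^sup>2"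
proof -
  have t: "norm (a - b) \<le> norm a + norm b" by (rule norm_triangle_ineq4)
  have "(norm (a - b))\<^sup>2 \<le> (norm a + norm b)\<^sup>2" using t by (intro power_mono) auto
  also have "\<dots> \<le> 2 * (norm a)\<^sup>2 + 2 * (norm b)\<^sup>2"
  proof -
    have "0 \<le> (norm a - norm b)\<^sup>2" by simp
    then show ?thesis by (simp add: power2_eq_square algebra_simps)
  qed
  finally show ?thesis .
qed

lemma int_fst2: "integrable (noisy_joint \<beta> p q) (\<lambda>z. (norm (fst z))\<^sup>2)"
proof (rule integrableI_nonneg)
  show "(\<lambda>z. (norm (fst z))\<^sup>2) \<in> borel_measurable (noisy_joint \<beta> p q)"
  proof -
    have "(\<lambda>x::'a. (norm x)\<^sup>2) \<in> borel_measurable borel" by simp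
    from measurable_compose[OF fst_meas this] show ?thesis unfolding J_meas_iff by simp
  qed
  show "AE z in noisy_joint \<beta> p q. 0 \<le> (norm (fst z))\<^sup>2" by simp
  show "(\<integral>\<^sup>+ z. ennreal ((norm (fst z))\<^sup>2) \<partial>noisy_joint \<beta> p q) < \<infinity>" by (rule R0_fin)
qed

lemma int_risk:
  assumes f: "f \<in> borel_measurable (borel :: 'a measure)"
    and fi: "integrable (noisy_joint \<beta> p q) (\<lambda>z. (norm (f (snd z)))\<^sup>2)"
  shows "integrable (noisy_joint \<beta> p q) (\<lambda>z. (norm (f (snd z) - fst z))\<^sup>2)"
proof (rule Bochner_Integration.integrable_bound)
  show "integrable (noisy_joint \<beta> p q) (\<lambda>z. 2 * (norm (f (snd z)))\<^sup>2 + 2 * (norm (fst z))\<^sup>2)"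
    using fi int_fst2 by auto
  show "(\<lambda>z. (norm (f (snd z) - fst z))\<^sup>2) \<in> borel_measurable (noisy_joint \<beta> p q)"
    unfolding J_meas_iff by (rule hmeas_r[OF f fst_meas])
  show "AE z in noisy_joint \<beta> p q. norm ((norm (f (snd z) - fst z))\<^sup>2) \<le> norm (2 * (norm (f (snd z)))\<^sup>2 + 2 * (norm (fst z))\<^sup>2)"
    using sq_le2 by (intro AE_I2) simp
qed

lemma risk_fs_fin: "(\<integral>\<^sup>+ z. ennreal ((norm (f_star \<beta> p q (snd z) - fst z))\<^sup>2) \<partial>noisy_joint \<beta> p q) < \<infinity>"
proof -
  have e: "(\<integral>\<^sup>+ z. ennreal ((norm (fst z))\<^sup>2) \<partial>noisy_joint \<beta> p q)
      = (\<integral>\<^sup>+ z. ennreal ((norm (f_star \<beta> p q (snd z) - fst z))\<^sup>2) \<partial>noisy_joint \<beta> p q)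
    + (\<integral>\<^sup>+ z. ennreal ((norm (f_star \<beta> p q (snd z)))\<^sup>2) \<partial>noisy_joint \<beta> p q)"
    using decomp[of "\<lambda>_. 0"] by simp
  have "(\<integral>\<^sup>+ z. ennreal ((norm (f_star \<beta> p q (snd z) - fst z))\<^sup>2) \<partial>noisy_joint \<beta> p q)
     \<le> (\<integral>\<^sup>+ z. ennreal ((norm (fst z))\<^sup>2) \<partial>noisy_joint \<beta> p q)"
    unfolding e by (rule add_increasing2[OF zero_le order_refl])
  then show ?thesis using R0_fin by (rule le_less_trans)
qed

lemma int_risk_fs: "integrable (noisy_joint \<beta> p q) (\<lambda>z. (norm (f_star \<beta> p q (snd z) - fst z))\<^sup>2)"
proof (rule integrableI_nonneg)
  show "(\<lambda>z. (norm (f_star \<beta> p q (snd z) - fst z))\<^sup>2) \<in> borel_measurable (noisy_joint \<beta> p q)"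
    unfolding J_meas_iff by (rule hmeas_r[OF fs_meas fst_meas])
qed (use risk_fs_fin in auto)

lemma adm_fs: "admissible (noisy_joint \<beta> p q) (f_star \<beta> p q)"
  unfolding admissible_def
proof
  show "f_star \<beta> p q \<in> borel_measurable borel" by (rule fs_meas)
  show "integrable (noisy_joint \<beta> p q) (\<lambda>z. (norm (f_star \<beta> p q (snd z)))\<^sup>2)"
  proof (rule Bochner_Integration.integrable_bound)
    show "integrable (noisy_joint \<beta> p q) (\<lambda>z. 2 * (norm (f_star \<beta> p q (snd z) - fst z))\<^sup>2 + 2 * (norm (- fst z))\<^sup>2)"
      using int_risk_fs int_fst2 by auto
    show "(\<lambda>z. (norm (f_star \<beta> p q (snd z)))\<^sup>2) \<in> borel_measurable (noisy_joint \<beta> p q)"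
    proof -
      have "(\<lambda>x::'a. (norm x)\<^sup>2) \<in> borel_measurable borel" by simp
      from measurable_compose[OF fs_snd_meas this] show ?thesis unfolding J_meas_iff by simp
    qed
    show "AE z in noisy_joint \<beta> p q. norm ((norm (f_star \<beta> p q (snd z)))\<^sup>2) \<le> norm (2 * (norm (f_star \<beta> p q (snd z) - fst z))\<^sup>2 + 2 * (norm (- fst z))\<^sup>2)"
    proof (intro AE_I2)
      fix z :: "'a \<times> 'a"
      have "(norm ((f_star \<beta> p q (snd z) - fst z) - (- fst z)))\<^sup>2 \<le> 2 * (norm (f_star \<beta> p q (snd z) - fst z))\<^sup>2 + 2 * (norm (- fst z))\<^sup>2"
        by (rule sq_le2)
      then show "norm ((norm (f_star \<beta> p q (snd z)))\<^sup>2) \<le> norm (2 * (norm (f_star \<beta> p q (snd z) - fst z))\<^sup>2 + 2 * (norm (- fst z))\<^sup>2)"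
        by simp
    qed
  qed
qed

lemma risk_eq:
  assumes f: "f \<in> borel_measurable (borel :: 'a measure)"
    and fi: "integrable (noisy_joint \<beta> p q) (\<lambda>z. (norm (f (snd z) - fst z))\<^sup>2)"
  shows "ennreal (sq_risk (noisy_joint \<beta> p q) f) = (\<integral>\<^sup>+ z. ennreal ((norm (f (snd z) - fst z))\<^sup>2) \<partial>noisy_joint \<beta> p q)"
    and "0 \<le> sq_risk (noisy_joint \<beta> p q) f"
proof -
  have s: "sq_risk (noisy_joint \<beta> p q) f = (\<integral>z. (norm (f (snd z) - fst z))\<^sup>2 \<partial>noisy_joint \<beta> p q)"
    unfolding sq_risk_def by (simp add: power2_norm_eq_inner)
  show "ennreal (sq_risk (noisy_joint \<beta> p q) f) = (\<integral>\<^sup>+ z. ennreal ((norm (f (snd z) - fst z))\<^sup>2) \<partial>noisy_joint \<beta> p q)"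
    unfolding s by (rule nn_integral_eq_integral[OF fi, symmetric]) simp
  show "0 \<le> sq_risk (noisy_joint \<beta> p q) f" unfolding s by (rule integral_nonneg_AE) simp
qed

lemma main:
  shows "admissible (noisy_joint \<beta> p q) (f_star \<beta> p q)
    \<and> (\<forall>f. admissible (noisy_joint \<beta> p q) f \<longrightarrow>
           sq_risk (noisy_joint \<beta> p q) (f_star \<beta> p q) \<le> sq_risk (noisy_joint \<beta> p q) f)
    \<and> (\<forall>f. admissible (noisy_joint \<beta> p q) f
           \<and> sq_risk (noisy_joint \<beta> p q) f = sq_risk (noisy_joint \<beta> p q) (f_star \<beta> p q) \<longrightarrow>
           (AE xt in distr (noisy_joint \<beta> p q) borel snd. f xt = f_star \<beta> p q xt))"
proof (intro conjI allI impI)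
  show "admissible (noisy_joint \<beta> p q) (f_star \<beta> p q)" by (rule adm_fs)
  note efs = risk_eq[OF fs_meas int_risk_fs]
  fix f assume "admissible (noisy_joint \<beta> p q) f"
  then have f: "f \<in> borel_measurable borel" and fi: "integrable (noisy_joint \<beta> p q) (\<lambda>z. (norm (f (snd z)))\<^sup>2)"
    unfolding admissible_def by auto
  note ef = risk_eq[OF f int_risk[OF f fi]]
  have d: "ennreal (sq_risk (noisy_joint \<beta> p q) f) = ennreal (sq_risk (noisy_joint \<beta> p q) (f_star \<beta> p q))
     + (\<integral>\<^sup>+ z. ennreal ((norm (f (snd z) - f_star \<beta> p q (snd z)))\<^sup>2) \<partial>noisy_joint \<beta> p q)"
    unfolding ef(1) efs(1) by (rule decomp[OF f])
  have "ennreal (sq_risk (noisy_joint \<beta> p q) (f_star \<beta> p q)) \<le> ennreal (sq_risk (noisy_joint \<beta> p q) f)"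
    unfolding d by (rule add_increasing2[OF zero_le order_refl])
  then show "sq_risk (noisy_joint \<beta> p q) (f_star \<beta> p q) \<le> sq_risk (noisy_joint \<beta> p q) f"
    using ef(2) by (simp add: ennreal_le_iff)
next
  fix f assume a: "admissible (noisy_joint \<beta> p q) f \<and> sq_risk (noisy_joint \<beta> p q) f = sq_risk (noisy_joint \<beta> p q) (f_star \<beta> p q)"
  then have f: "f \<in> borel_measurable borel" and fi: "integrable (noisy_joint \<beta> p q) (\<lambda>z. (norm (f (snd z)))\<^sup>2)"
    and eq: "sq_risk (noisy_joint \<beta> p q) f = sq_risk (noisy_joint \<beta> p q) (f_star \<beta> p q)"
    unfolding admissible_def by auto
  note ef = risk_eq[OF f int_risk[OF f fi]]
  note efs = risk_eq[OF fs_meas int_risk_fs]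
  let ?D = "(\<integral>\<^sup>+ z. ennreal ((norm (f (snd z) - f_star \<beta> p q (snd z)))\<^sup>2) \<partial>noisy_joint \<beta> p q)"
  have d: "ennreal (sq_risk (noisy_joint \<beta> p q) f) = ennreal (sq_risk (noisy_joint \<beta> p q) (f_star \<beta> p q)) + ?D"
    unfolding ef(1) efs(1) by (rule decomp[OF f])
  then have "ennreal (sq_risk (noisy_joint \<beta> p q) (f_star \<beta> p q)) + 0 = ennreal (sq_risk (noisy_joint \<beta> p q) (f_star \<beta> p q)) + ?D"
    unfolding eq by simp
  then have D0: "?D = 0" unfolding ennreal_add_left_cancel by simp
  have md: "(\<lambda>z::'a\<times>'a. ennreal ((norm (f (snd z) - f_star \<beta> p q (snd z)))\<^sup>2)) \<in> borel_measurable (noisy_joint \<beta> p q)"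
    unfolding J_meas_iff using hmeas[where g="\<lambda>z. f_star \<beta> p q (snd z)", OF f fs_snd_meas] .
  have "AE z in noisy_joint \<beta> p q. ennreal ((norm (f (snd z) - f_star \<beta> p q (snd z)))\<^sup>2) = 0"
    using D0 nn_integral_0_iff_AE[OF md] by simp
  then have ae: "AE z in noisy_joint \<beta> p q. f (snd z) = f_star \<beta> p q (snd z)"
    by eventually_elim simp
  have sm: "snd \<in> noisy_joint \<beta> p q \<rightarrow>\<^sub>M (borel :: 'a measure)"
    using snd_meas unfolding measurable_cong_sets[OF J_sets refl] .
  have ps: "{x \<in> space (borel :: 'a measure). f x = f_star \<beta> p q x} \<in> sets borel"
    by (rule measurable_equality_set[OF f fs_meas])
  show "AE xt in distr (noisy_joint \<beta> p q) borel snd. f xt = f_star \<beta> p q xt"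
    using ae by (subst AE_distr_iff[OF sm ps])
qed

end

theorem theorem1:
  fixes \<beta> :: real and p :: "'a::euclidean_space \<Rightarrow> real" and q :: "'a \<Rightarrow> 'a \<Rightarrow> real"
  assumes beta: "0 < \<beta>" "\<beta> < 1"
    and p_meas: "p \<in> borel_measurable borel"
    and p_nonneg: "\<And>x. 0 \<le> p x"
    and p_prob: "(\<integral>\<^sup>+ x. ennreal (p x) \<partial>lborel) = 1"
    and p_second_moment: "integrable (density lborel (\<lambda>x. ennreal (p x))) (\<lambda>x. (norm x)\<^sup>2)"
    and q_meas: "(\<lambda>(x, xt). q x xt) \<in> borel_measurable borel"
    and q_nonneg: "\<And>x xt. 0 \<le> q x xt"
    and q_prob: "\<And>x. (\<integral>\<^sup>+ xt. ennreal (q x xt) \<partial>lborel) = 1"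
  shows "admissible (noisy_joint \<beta> p q) (f_star \<beta> p q)
    \<and> (\<forall>f. admissible (noisy_joint \<beta> p q) f \<longrightarrow>
           sq_risk (noisy_joint \<beta> p q) (f_star \<beta> p q) \<le> sq_risk (noisy_joint \<beta> p q) f)
    \<and> (\<forall>f. admissible (noisy_joint \<beta> p q) f
           \<and> sq_risk (noisy_joint \<beta> p q) f = sq_risk (noisy_joint \<beta> p q) (f_star \<beta> p q) \<longrightarrow>
           (AE xt in distr (noisy_joint \<beta> p q) borel snd. f xt = f_star \<beta> p q xt))"
proof -
  interpret setting \<beta> p q
    by (unfold_locales) (use assms in auto)
  show ?thesis by (rule main)
qed

end
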